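(* Let $k\ge 1$ and $r\ge 0$ be integers and let $G=(V,E)$ be a $(k+r)$-regular graph. A set $S\subseteq V$ is a $k$-conversion set of $G$ if and only if $G[V-S]$ is $r$-degenerate.
   Context: For a graph $G=(V,E)$, a positive integer $k$ and a set $S_0\subseteq V$, the irreversible $k$-threshold conversion process is defined by: for $t=1,2,\dots$, $S_t$ is obtained from $S_{t-1}$ by adjoining all vertices having at least $k$ neighbours in $S_{t-1}$. The set $S_0$ is a $k$-conversion set of $G$ if $S_t=V$ for some $t\ge 0$. A graph is $r$-degenerate if every (nonempty) induced subgraph of it has a vertex of degree at most $r$. *)

theory Defs
  imports Main
begin

definition simple_graph :: "'a set \<Rightarrow> ('a \<Rightarrow> 'a \<Rightarrow> bool) \<Rightarrow> bool" where
  "simple_graph V E \<longleftrightarrow> finite V \<and> (\<forall>u v. E u v \<longrightarrow> u \<in> V \<and> v \<in> V) \<and>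
     (\<forall>u v. E u v \<longrightarrow> E v u) \<and> (\<forall>v. \<not> E v v)"

definition neighbours :: "'a set \<Rightarrow> ('a \<Rightarrow> 'a \<Rightarrow> bool) \<Rightarrow> 'a \<Rightarrow> 'a set" where
  "neighbours V E v = {u \<in> V. E v u}"

definition regular :: "'a set \<Rightarrow> ('a \<Rightarrow> 'a \<Rightarrow> bool) \<Rightarrow> nat \<Rightarrow> bool" where
  "regular V E d \<longleftrightarrow> (\<forall>v\<in>V. card (neighbours V E v) = d)"

definition conv_step :: "'a set \<Rightarrow> ('a \<Rightarrow> 'a \<Rightarrow> bool) \<Rightarrow> nat \<Rightarrow> 'a set \<Rightarrow> 'a set" where
  "conv_step V E k S = S \<union> {v \<in> V. k \<le> card (neighbours V E v \<inter> S)}"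

definition conversion_set :: "'a set \<Rightarrow> ('a \<Rightarrow> 'a \<Rightarrow> bool) \<Rightarrow> nat \<Rightarrow> 'a set \<Rightarrow> bool" where
  "conversion_set V E k S0 \<longleftrightarrow> S0 \<subseteq> V \<and> (\<exists>t. (conv_step V E k ^^ t) S0 = V)"

definition degenerate :: "'a set \<Rightarrow> ('a \<Rightarrow> 'a \<Rightarrow> bool) \<Rightarrow> nat \<Rightarrow> bool" where
  "degenerate V E r \<longleftrightarrow>
     (\<forall>W. W \<subseteq> V \<and> W \<noteq> {} \<longrightarrow> (\<exists>v\<in>W. card (neighbours V E v \<inter> W) \<le> r))"

definition induced :: "'a set \<Rightarrow> ('a \<Rightarrow> 'a \<Rightarrow> bool) \<Rightarrow> 'a \<Rightarrow> 'a \<Rightarrow> bool" where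
  "induced W E = (\<lambda>u v. E u v \<and> u \<in> W \<and> v \<in> W)"

end

theory Submission
  imports Defs
begin

lemma nb_split:
  assumes "simple_graph V E" "regular V E d" "v \<in> V" "W \<subseteq> V"
  shows "card (neighbours V E v \<inter> W) + card (neighbours V E v \<inter> (V - W)) = d"
proof -
  have f: "finite (neighbours V E v)" using assms(1) unfolding simple_graph_def neighbours_def by auto
  have "neighbours V E v = (neighbours V E v \<inter> W) \<union> (neighbours V E v \<inter> (V - W))"
    unfolding neighbours_def by auto
  moreover have "card ((neighbours V E v \<inter> W) \<union> (neighbours V E v \<inter> (V - W))) = card (neighbours V E v \<inter> W) + card (neighbours V E v \<inter> (V - W))"
    by (rule card_Un_disjoint) (use f in auto)
  ultimately have "card (neighbours V E v) = card (neighbours V E v \<inter> W) + card (neighbours V E v \<inter> (V - W))"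
    by simp
  thus ?thesis using assms(2,3) unfolding regular_def by auto
qed

lemma step_sub:
  assumes "S \<subseteq> V" shows "(conv_step V E k ^^ t) S \<subseteq> V"
  using assms by (induction t) (auto simp: conv_step_def)

theorem proposition4p1:
  fixes V :: "'a set" and E :: "'a \<Rightarrow> 'a \<Rightarrow> bool" and k r :: nat and S :: "'a set"
  assumes "simple_graph V E"
    and "k \<ge> 1"
    and "regular V E (k + r)"
    and "S \<subseteq> V"
  shows "conversion_set V E k S \<longleftrightarrow> degenerate (V - S) (induced (V - S) E) r"
proof -
  let ?F = "conv_step V E k"
  have fin: "finite V" using assms(1) unfolding simple_graph_def by auto
  have nbind: "neighbours (V - S) (induced (V - S) E) v \<inter> W = neighbours V E v \<inter> W"
    if "W \<subseteq> V - S" "v \<in> W" for v W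
    using that unfolding neighbours_def induced_def by auto
  show ?thesis
  proof
    assume "conversion_set V E k S"
    then obtain t0 where t0: "(?F ^^ t0) S = V" unfolding conversion_set_def by auto
    show "degenerate (V - S) (induced (V - S) E) r"
      unfolding degenerate_def
    proof (intro allI impI)
      fix W assume W: "W \<subseteq> V - S \<and> W \<noteq> {}"
      show "\<exists>v\<in>W. card (neighbours (V - S) (induced (V - S) E) v \<inter> W) \<le> r"
      proof (rule ccontr)
        assume H: "\<not> ?thesis"
        have H2: "card (neighbours V E v \<inter> W) > r" if "v \<in> W" for v
        proof -
          have "\<not> card (neighbours (V - S) (induced (V - S) E) v \<inter> W) \<le> r" using H that by blast
          thus ?thesis using nbind[of W v] W that by simp
        qed
        have "(?F ^^ t) S \<inter> W = {}" for t
        proof (induction t)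
          case 0 then show ?case using W by auto
        next
          case (Suc t)
          show ?case
          proof (rule ccontr)
            assume "(?F ^^ Suc t) S \<inter> W \<noteq> {}"
            then obtain v where v: "v \<in> (?F ^^ Suc t) S" "v \<in> W" by auto
            have vV: "v \<in> V" using v W by auto
            have "v \<notin> (?F ^^ t) S" using Suc v by auto
            hence "k \<le> card (neighbours V E v \<inter> (?F ^^ t) S)"
              using v(1) by (auto simp: conv_step_def)
            also have "\<dots> \<le> card (neighbours V E v \<inter> (V - W))"
              apply (rule card_mono)
              using fin apply simp
              using Suc step_sub[OF assms(4), where E=E and k=k and t=t] by auto
            finally have "k \<le> card (neighbours V E v \<inter> (V - W))" .
            moreover have "card (neighbours V E v \<inter> W) + card (neighbours V E v \<inter> (V - W)) = k + r"
              using nb_split[OF assms(1,3) vV] W by auto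
            ultimately show False using H2[OF v(2)] by linarith
          qed
        qed
        from this[of t0] t0 W show False by auto
      qed
    qed
  next
    assume D: "degenerate (V - S) (induced (V - S) E) r"
    have grow: "(?F ^^ t) S = V \<or> t \<le> card ((?F ^^ t) S)" for t
    proof (induction t)
      case 0 then show ?case by simp
    next
      case (Suc t)
      let ?T = "(?F ^^ t) S"
      have TV: "?T \<subseteq> V" by (rule step_sub[OF assms(4)])
      have sup: "?T \<subseteq> (?F ^^ Suc t) S" by (auto simp: conv_step_def)
      show ?case
      proof (cases "?T = V")
        case True
        then show ?thesis using sup step_sub[OF assms(4), where E=E and k=k and t="Suc t"] by auto
      next
        case False
        let ?W = "V - ?T"
        have ST: "S \<subseteq> ?T"
          by (induction t) (auto simp: conv_step_def)
        have W: "?W \<subseteq> V - S" "?W \<noteq> {}" using ST False TV by auto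
        then obtain v where v: "v \<in> ?W" "card (neighbours (V - S) (induced (V - S) E) v \<inter> ?W) \<le> r"
          using D unfolding degenerate_def by blast
        have vV: "v \<in> V" using v by auto
        have "card (neighbours V E v \<inter> ?W) \<le> r" using v nbind[OF W(1) v(1)] by simp
        moreover have "card (neighbours V E v \<inter> ?W) + card (neighbours V E v \<inter> (V - ?W)) = k + r"
          using nb_split[OF assms(1,3) vV] by auto
        moreover have "V - ?W = ?T" using TV by auto
        ultimately have "k \<le> card (neighbours V E v \<inter> ?T)" by simp
        hence "v \<in> (?F ^^ Suc t) S" using vV by (auto simp: conv_step_def)
        hence "?T \<subset> (?F ^^ Suc t) S" using sup v by auto
        hence "card ?T < card ((?F ^^ Suc t) S)"
          using psubset_card_mono finite_subset[OF step_sub[OF assms(4), where E=E and k=k and t="Suc t"] fin] by blast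
        then show ?thesis using Suc False by auto
      qed
    qed
    have "card ((?F ^^ Suc (card V)) S) \<le> card V"
      using card_mono[OF fin step_sub[OF assms(4)]] by blast
    hence "(?F ^^ Suc (card V)) S = V" using grow[of "Suc (card V)"] by auto
    thus "conversion_set V E k S" unfolding conversion_set_def using assms(4) by blast
  qed
qed

end
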